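(* Let $\phi$ and $\psi$ be Drinfeld modules over $K$ with $\operatorname{rk}\phi>\operatorname{rk}\psi$, and put $n=\operatorname{rk}\phi$. Let $K\{\tau\}_{<n}=\{w\in K\{\tau\}\mid \deg_\tau w<n\}$. Then there is an $\mathbb F_q$-linear isomorphism $\operatorname{Ext}^1_\tau(\phi,\psi)\cong K\{\tau\}_{<n}$; namely, the map sending $w\in K\{\tau\}_{<n}$ to the class of the biderivation $\delta$ with $\delta(t)=w$ is an isomorphism of $\mathbb F_q$-vector spaces $K\{\tau\}_{<n}\to \mathrm{Der}(\phi,\psi)/\mathrm{Der}_{in}(\phi,\psi)$.
   Context: Let $q$ be a power of a prime $p$, $A=\mathbb F_q[t]$, and $K$ a field of characteristic $p$ with an $\mathbb F_q$-algebra homomorphism $\iota:A\to K$; put $\theta=\iota(t)$. $K\{\tau\}$ is the ring of twisted polynomials $\sum_i a_i\tau^i$ ($a_i\in K$) with $\tau x=x^q\tau$; write $c^{(i)}=c^{q^i}$. A $\mathbf t$-module of dimension $d$ over $K$ is an $\mathbb F_q$-algebra homomorphism $\Phi:\mathbb F_q[t]\to \mathrm{Mat}_d(K\{\tau\})$ with $\Phi_t:=\Phi(t)=(\theta I_d+N)+M_1\tau+\dots+M_r\tau^r$, $N$ nilpotent, $M_i\in\mathrm{Mat}_d(K)$; its rank $\operatorname{rk}\Phi$ is the $\tau$-degree of $\Phi_t$. A Drinfeld module is a $\mathbf t$-module of dimension $1$, i.e. $\phi_t=\theta+\sum_{i=1}^n a_i\tau^i$. For $\mathbf t$-modules $\Phi$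 (dimension $d$) and $\Psi$ (dimension $e$), $\mathrm{Der}(\Phi,\Psi)$ is the $\mathbb F_q$-space of $\mathbb F_q$-linear maps $\delta:\mathbb F_q[t]\to\mathrm{Mat}_{e\times d}(K\{\tau\})$ with $\delta(ab)=\Psi_a\delta(b)+\delta(a)\Phi_b$; such $\delta$ is determined by $\delta(t)$, and every value of $\delta(t)$ occurs. The inner biderivations $\mathrm{Der}_{in}(\Phi,\Psi)$ are those of the form $\delta^{(U)}(a)=U\Phi_a-\Psi_aU$ with $U\in\mathrm{Mat}_{e\times d}(K\{\tau\})$. $\operatorname{Ext}^1_\tau(\Phi,\Psi)$ (the group of extensions $0\to\Psi\to X\to\Phi\to0$ of $\mathbf t$-modules with Baer sum) is identified with $\mathrm{Der}(\Phi,\Psi)/\mathrm{Der}_{in}(\Phi,\Psi)$, the class of $\delta$ corresponding to the extension with middle term $X_t=\begin{bmatrix}\Phi_t&0\\ \delta(t)&\Psi_t\end{bmatrix}$; its $\mathbb F_q[t]$-module structure is $a*[\delta]=[\Psi_a\delta]$. *)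

theory Defs
  imports "HOL-Computational_Algebra.Polynomial"
begin

text \<open>Twisted polynomials K{tau} are represented by their coefficient sequences,
  i.e. by elements of 'k poly: the polynomial f represents sum_i coeff f i tau^i.
  Addition is polynomial addition; multiplication is the twisted product
  (a tau^i)(b tau^j) = a b^(q^i) tau^(i+j).\<close>

definition tmult :: "nat \<Rightarrow> 'k::field poly \<Rightarrow> 'k poly \<Rightarrow> 'k poly" where
  "tmult q f g = (\<Sum>i\<le>degree f. \<Sum>j\<le>degree g.
       monom (coeff f i * coeff g j ^ (q ^ i)) (i + j))"

primrec tpow :: "nat \<Rightarrow> 'k::field poly \<Rightarrow> nat \<Rightarrow> 'k poly" where
  "tpow q f 0 = 1"
| "tpow q f (Suc k) = tmult q (tpow q f k) f"

text \<open>The copy of F_q inside K (the fixed points of Frobenius x \<mapsto> x^q).\<close>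
definition Fq :: "nat \<Rightarrow> 'k::field set" where
  "Fq q = {x. x ^ q = x}"

text \<open>A = F_q[t], as polynomials over K with all coefficients in F_q.\<close>
definition Apoly :: "nat \<Rightarrow> 'k::field poly set" where
  "Apoly q = {a. \<forall>i. coeff a i \<in> Fq q}"

definition tvar :: "'k::field poly" where
  "tvar = [:0, 1:]"

text \<open>A Drinfeld module over K (with theta = iota(t)) is given by phi_t =
  theta + a_1 tau + ... + a_n tau^n; we identify it with phi_t.\<close>
definition drinfeld_module :: "'k::field \<Rightarrow> 'k poly \<Rightarrow> bool" where
  "drinfeld_module \<theta> phit \<longleftrightarrow> coeff phit 0 = \<theta>"

definition dm_eval :: "nat \<Rightarrow> 'k::field poly \<Rightarrow> 'k poly \<Rightarrow> 'k poly" where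
  "dm_eval q phit a = (\<Sum>i\<le>degree a. smult (coeff a i) (tpow q phit i))"

definition Der :: "nat \<Rightarrow> 'k::field poly \<Rightarrow> 'k poly \<Rightarrow> ('k poly \<Rightarrow> 'k poly) set" where
  "Der q phit psit = {\<delta>.
     (\<forall>a. a \<notin> Apoly q \<longrightarrow> \<delta> a = 0) \<and>
     (\<forall>a\<in>Apoly q. \<forall>b\<in>Apoly q. \<delta> (a + b) = \<delta> a + \<delta> b) \<and>
     (\<forall>c\<in>Fq q. \<forall>a\<in>Apoly q. \<delta> (smult c a) = smult c (\<delta> a)) \<and>
     (\<forall>a\<in>Apoly q. \<forall>b\<in>Apoly q.
        \<delta> (a * b) = tmult q (dm_eval q psit a) (\<delta> b) + tmult q (\<delta> a) (dm_eval q phit b))}"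

definition Der_in :: "nat \<Rightarrow> 'k::field poly \<Rightarrow> 'k poly \<Rightarrow> ('k poly \<Rightarrow> 'k poly) set" where
  "Der_in q phit psit = {\<delta>. \<exists>U. \<delta> = (\<lambda>a. if a \<in> Apoly q
       then tmult q U (dm_eval q phit a) - tmult q (dm_eval q psit a) U else 0)}"

definition ext_rel :: "nat \<Rightarrow> 'k::field poly \<Rightarrow> 'k poly \<Rightarrow>
    (('k poly \<Rightarrow> 'k poly) \<times> ('k poly \<Rightarrow> 'k poly)) set" where
  "ext_rel q phit psit = {(\<delta>1, \<delta>2). \<delta>1 \<in> Der q phit psit \<and> \<delta>2 \<in> Der q phit psit \<and>
      (\<lambda>a. \<delta>1 a - \<delta>2 a) \<in> Der_in q phit psit}"

definition Ext1 :: "nat \<Rightarrow> 'k::field poly \<Rightarrow> 'k poly \<Rightarrow> ('k poly \<Rightarrow> 'k poly) set set" where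
  "Ext1 q phit psit = Der q phit psit // ext_rel q phit psit"

definition ext_class :: "nat \<Rightarrow> 'k::field poly \<Rightarrow> 'k poly \<Rightarrow> 'k poly \<Rightarrow> ('k poly \<Rightarrow> 'k poly) set" where
  "ext_class q phit psit w = {\<delta> \<in> Der q phit psit. \<exists>\<delta>0 \<in> Der q phit psit.
      \<delta>0 tvar = w \<and> (\<delta>, \<delta>0) \<in> ext_rel q phit psit}"

end

theory Submission
  imports Defs "HOL-Computational_Algebra.Primes"
begin

definition fr :: "nat \<Rightarrow> 'k::field poly \<Rightarrow> 'k poly" where
  "fr k g = map_poly (\<lambda>x. x ^ k) g"

lemma coeff_fr: "k > 0 \<Longrightarrow> coeff (fr k g) j = coeff g j ^ k"
  unfolding fr_def by (simp add: coeff_map_poly)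

lemma degree_fr_le: "k > 0 \<Longrightarrow> degree (fr k g) \<le> degree g"
  by (rule degree_le) (auto simp: coeff_fr coeff_eq_0 zero_power)

lemma tmult_sum:
  assumes "q > 0"
  shows "tmult q f g = (\<Sum>i\<le>degree f. monom (coeff f i) i * fr (q ^ i) g)"
  unfolding tmult_def
proof (rule sum.cong[OF refl])
  fix i
  have qi: "q ^ i > 0" using assms by simp
  have "(\<Sum>j\<le>degree g. monom (coeff f i * coeff g j ^ q ^ i) (i + j))
      = (\<Sum>j\<le>degree g. monom (coeff f i) i * monom (coeff (fr (q^i) g) j) j)"
    by (simp add: mult_monom coeff_fr[OF qi])
  also have "\<dots> = monom (coeff f i) i * (\<Sum>j\<le>degree g. monom (coeff (fr (q^i) g) j) j)"
    by (simp add: sum_distrib_left)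
  also have "(\<Sum>j\<le>degree g. monom (coeff (fr (q^i) g) j) j) = fr (q^i) g"
    by (rule poly_as_sum_of_monoms'[OF degree_fr_le[OF qi]])
  finally show "(\<Sum>j\<le>degree g. monom (coeff f i * coeff g j ^ q ^ i) (i + j))
      = monom (coeff f i) i * fr (q ^ i) g" .
qed

lemma tmult_sumN:
  assumes "q > 0" "degree f \<le> N"
  shows "tmult q f g = (\<Sum>i\<le>N. monom (coeff f i) i * fr (q ^ i) g)"
  unfolding tmult_sum[OF assms(1)]
  by (rule sum.mono_neutral_left) (use assms(2) in \<open>auto simp: coeff_eq_0\<close>)

lemma fr_1: "fr 1 g = g" by (simp add: fr_def)

lemma fr_pCons: "k > 0 \<Longrightarrow> fr k (pCons a g) = pCons (a ^ k) (fr k g)"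
  unfolding fr_def by (simp add: map_poly_pCons)

lemma fr_fr: "k > 0 \<Longrightarrow> m > 0 \<Longrightarrow> fr k (fr m g) = fr (m * k) g"
  unfolding fr_def by (simp add: map_poly_map_poly o_def power_mult)

lemma tmult_0_left [simp]: "tmult q 0 g = 0"
  by (simp add: tmult_def)

lemma tmult_pCons:
  assumes "q > 0"
  shows "tmult q (pCons a f) g = smult a g + tmult q f (pCons 0 (fr q g))"
proof -
  have "tmult q (pCons a f) g = (\<Sum>i\<le>Suc (degree f). monom (coeff (pCons a f) i) i * fr (q ^ i) g)"
    by (rule tmult_sumN[OF assms]) (simp add: degree_pCons_le)
  also have "\<dots> = monom a 0 * fr 1 g + (\<Sum>i\<le>degree f. monom (coeff f i) (Suc i) * fr (q ^ Suc i) g)"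
    by (subst sum.atMost_Suc_shift) simp
  also have "monom a 0 * fr 1 g = smult a g" by (simp add: fr_def monom_0)
  also have "(\<Sum>i\<le>degree f. monom (coeff f i) (Suc i) * fr (q ^ Suc i) g)
     = tmult q f (pCons 0 (fr q g))"
    unfolding tmult_sum[OF assms]
  proof (rule sum.cong[OF refl])
    fix i
    have "fr (q ^ i) (pCons 0 (fr q g)) = pCons 0 (fr (q ^ Suc i) g)"
      using assms by (simp add: fr_pCons fr_fr mult.commute)
    then show "monom (coeff f i) (Suc i) * fr (q ^ Suc i) g = monom (coeff f i) i * fr (q ^ i) (pCons 0 (fr q g))"
      by (simp add: monom_Suc)
  qed
  finally show ?thesis .
qed


lemma smult_sum_right: "smult c (\<Sum>i\<in>S. f i) = (\<Sum>i\<in>S. smult c (f i))"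
  by (induct S rule: infinite_finite_induct) (simp_all add: smult_add_right)

definition lin :: "(nat \<Rightarrow> 'k::field poly) \<Rightarrow> 'k poly \<Rightarrow> 'k poly" where
  "lin D a = (\<Sum>i\<le>degree a. smult (coeff a i) (D i))"

lemma lin_N: "degree a \<le> N \<Longrightarrow> lin D a = (\<Sum>i\<le>N. smult (coeff a i) (D i))"
  unfolding lin_def by (rule sum.mono_neutral_left) (auto simp: coeff_eq_0)

lemma lin_add: "lin D (a + b) = lin D a + lin D b"
proof -
  let ?N = "max (degree a) (degree b)"
  have "degree (a + b) \<le> ?N" by (rule degree_add_le) auto
  then show ?thesis
    by (simp add: lin_N[of "a+b" ?N] lin_N[of a ?N] lin_N[of b ?N] smult_add_left sum.distrib)
qed

lemma lin_smult: "lin D (smult c a) = smult c (lin D a)"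
proof -
  have "smult c (\<Sum>i\<le>degree a. smult (coeff a i) (D i)) = (\<Sum>i\<le>degree a. smult c (smult (coeff a i) (D i)))"
    by (rule smult_sum_right)
  then show ?thesis by (simp add: lin_N[of "smult c a" "degree a"] lin_def)
qed

lemma lin_0 [simp]: "lin D 0 = 0" by (simp add: lin_def)

lemma lin_1: "lin D 1 = D 0" by (simp add: lin_def)

lemma lin_pCons: "lin D (pCons c a) = smult c (D 0) + lin (\<lambda>i. D (Suc i)) a"
proof -
  have "lin D (pCons c a) = (\<Sum>i\<le>Suc (degree a). smult (coeff (pCons c a) i) (D i))"
    by (rule lin_N) (simp add: degree_pCons_le)
  also have "\<dots> = smult c (D 0) + lin (\<lambda>i. D (Suc i)) a"
    by (subst sum.atMost_Suc_shift) (simp add: lin_def)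
  finally show ?thesis .
qed

lemma lin_addD: "lin (\<lambda>i. D i + E i) a = lin D a + lin E a"
  by (simp add: lin_def smult_add_right sum.distrib)


primrec Dseq :: "nat \<Rightarrow> 'k::field poly \<Rightarrow> 'k poly \<Rightarrow> 'k poly \<Rightarrow> nat \<Rightarrow> 'k poly" where
  "Dseq q phit psit w 0 = 0"
| "Dseq q phit psit w (Suc i) = tmult q psit (Dseq q phit psit w i) + tmult q w (tpow q phit i)"

definition inner :: "nat \<Rightarrow> 'k::field poly \<Rightarrow> 'k poly \<Rightarrow> 'k poly \<Rightarrow> 'k poly" where
  "inner q phit psit U = tmult q U phit - tmult q psit U"

definition dlt :: "nat \<Rightarrow> 'k::field poly \<Rightarrow> 'k poly \<Rightarrow> 'k poly \<Rightarrow> 'k poly \<Rightarrow> 'k poly" where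
  "dlt q phit psit w a = (if a \<in> Apoly q then lin (Dseq q phit psit w) a else 0)"

context
  fixes q :: nat
  assumes qpos: "q > 0"
    and frob: "\<And>x y :: 'k::field. (x + y) ^ q = x ^ q + y ^ q"
begin

lemma zq [simp]: "(0::'k) ^ q = 0"
  using qpos by simp

lemma frob_minus: "(- x :: 'k) ^ q = - (x ^ q)"
proof -
  have "(x + - x) ^ q = x ^ q + (- x) ^ q" by (rule frob)
  then have "x ^ q + (- x) ^ q = 0" using qpos by simp
  from minus_unique[OF this] show ?thesis by simp
qed

lemma fr_add: "fr q (f + g :: 'k poly) = fr q f + fr q g"
  by (rule poly_eqI) (simp add: coeff_fr qpos frob)

lemma fr_0 [simp]: "fr q (0 :: 'k poly) = 0"
  by (rule poly_eqI) (simp add: coeff_fr qpos)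

lemma fr_smult: "fr q (smult c g :: 'k poly) = smult (c ^ q) (fr q g)"
  by (rule poly_eqI) (simp add: coeff_fr qpos power_mult_distrib)

lemma fr_monom1: "fr q (monom (1::'k) k) = monom 1 k"
  by (rule poly_eqI) (simp add: coeff_fr qpos coeff_monom)

lemma tmult_pCons0_right: "tmult q f (pCons 0 m :: 'k poly) = pCons 0 (tmult q f m)"
  by (induct f arbitrary: m) (simp_all add: tmult_pCons qpos fr_pCons)

lemma tmult_0_right [simp]: "tmult q f (0 :: 'k poly) = 0"
  by (induct f) (simp_all add: tmult_pCons qpos)

lemma tmult_add_right: "tmult q f (g + h :: 'k poly) = tmult q f g + tmult q f h"
  by (induct f arbitrary: g h) (simp_all add: tmult_pCons qpos fr_add smult_add_right tmult_pCons0_right algebra_simps)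

lemma tmult_add_left: "tmult q (f + g) (h :: 'k poly) = tmult q f h + tmult q g h"
proof (induct f arbitrary: g h)
  case 0 then show ?case by simp
next
  case (pCons a f)
  obtain b g' where g: "g = pCons b g'" by (cases g) auto
  show ?case by (simp add: g tmult_pCons qpos pCons smult_add_left algebra_simps)
qed

lemma tmult_smult_left: "tmult q (smult c f) (g :: 'k poly) = smult c (tmult q f g)"
  by (induct f arbitrary: g) (simp_all add: tmult_pCons qpos smult_add_right)

lemma tmult_smult_right: "c ^ q = c \<Longrightarrow> tmult q f (smult c g :: 'k poly) = smult c (tmult q f g)"
  by (induct f arbitrary: g) (simp_all add: tmult_pCons qpos smult_add_right fr_smult mult.commute tmult_pCons0_right)

lemma tmult_minus_right: "tmult q f (- g :: 'k poly) = - tmult q f g"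
proof -
  have "tmult q f g + tmult q f (- g) = 0" using tmult_add_right[of f g "- g"] by simp
  from add.inverse_unique[OF this] show ?thesis by simp
qed

lemma tmult_minus_left: "tmult q (- f) (g :: 'k poly) = - tmult q f g"
proof -
  have "tmult q f g + tmult q (- f) g = 0" using tmult_add_left[of f "- f" g] by simp
  from add.inverse_unique[OF this] show ?thesis by simp
qed

lemma tmult_diff_right: "tmult q f (g - h :: 'k poly) = tmult q f g - tmult q f h"
  using tmult_add_right[of f g "- h"] by (simp add: tmult_minus_right)

lemma tmult_diff_left: "tmult q (f - g) (h :: 'k poly) = tmult q f h - tmult q g h"
  using tmult_add_left[of f "- g" h] by (simp add: tmult_minus_left)

lemma mult_monom1_Suc: "(f :: 'k poly) * monom 1 (Suc k) = pCons 0 (f * monom 1 k)"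
  by (simp add: monom_Suc)

lemma tmult_monom1: "tmult q f (monom (1::'k) k) = f * monom 1 k"
  by (induct f arbitrary: k) (simp_all add: tmult_pCons qpos fr_monom1 monom_Suc[symmetric] smult_monom mult_monom1_Suc)

lemma tmult_1_right [simp]: "tmult q f (1 :: 'k poly) = f"
  using tmult_monom1[of f 0] by (simp add: monom_0 one_pCons)

lemma tmult_1_left [simp]: "tmult q 1 (g :: 'k poly) = g"
  by (simp add: one_pCons tmult_pCons qpos)


lemma fr_tmult: "fr q (tmult q g (h :: 'k poly)) = tmult q (fr q g) (fr q h)"
  by (induct g arbitrary: h) (simp_all add: tmult_pCons qpos fr_pCons fr_add fr_smult)

lemma tmult_const_left [simp]: "tmult q [:c:] (g :: 'k poly) = smult c g"
  by (simp add: tmult_pCons qpos)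

lemma tmult_const_right: "c ^ q = c \<Longrightarrow> tmult q f [:c:] = smult c (f :: 'k poly)"
  using tmult_smult_right[of c f 1] by simp

lemma tmult_pCons0_left: "tmult q (pCons 0 f) (h :: 'k poly) = tmult q f (pCons 0 (fr q h))"
  by (simp add: tmult_pCons qpos)

lemma tmult_assoc: "tmult q (tmult q f g) (h :: 'k poly) = tmult q f (tmult q g h)"
proof (induct f arbitrary: g h)
  case 0 then show ?case by simp
next
  case (pCons a f)
  have "tmult q (tmult q (pCons a f) g) h
      = smult a (tmult q g h) + tmult q (tmult q f (pCons 0 (fr q g))) h"
    by (simp add: tmult_pCons qpos tmult_add_left tmult_smult_left)
  also have "tmult q (tmult q f (pCons 0 (fr q g))) h = tmult q f (tmult q (pCons 0 (fr q g)) h)"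
    by (rule pCons(2))
  also have "tmult q (pCons 0 (fr q g)) h = pCons 0 (fr q (tmult q g h))"
    by (simp add: tmult_pCons0_left tmult_pCons0_right fr_tmult)
  finally show ?case by (simp add: tmult_pCons qpos)
qed

lemma tmult_sum_left: "tmult q (\<Sum>i\<in>I. f i) (g :: 'k poly) = (\<Sum>i\<in>I. tmult q (f i) g)"
  by (induct I rule: infinite_finite_induct) (simp_all add: tmult_add_left)

lemma tmult_sum_right: "tmult q g (\<Sum>i\<in>I. f i :: 'k poly) = (\<Sum>i\<in>I. tmult q g (f i))"
  by (induct I rule: infinite_finite_induct) (simp_all add: tmult_add_right)

lemma coeff_tmult:
  "coeff (tmult q f (g :: 'k poly)) n = (\<Sum>i\<le>degree f. if n < i then 0 else coeff f i * coeff g (n - i) ^ (q ^ i))"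
  unfolding tmult_sum[OF qpos] coeff_sum coeff_monom_mult using qpos
  by (intro sum.cong refl) (simp add: coeff_fr)

lemma degree_tmult_le: "degree (tmult q f (g :: 'k poly)) \<le> degree f + degree g"
proof (rule degree_le, intro allI impI)
  fix n assume n: "degree f + degree g < n"
  have "\<And>i. i \<le> degree f \<Longrightarrow> coeff g (n - i) = 0" using n by (intro coeff_eq_0) auto
  then show "coeff (tmult q f g) n = 0"
    unfolding coeff_tmult using qpos by (intro sum.neutral) auto
qed

lemma coeff_tmult_top:
  "coeff (tmult q f (g :: 'k poly)) (degree f + degree g) = lead_coeff f * lead_coeff g ^ (q ^ degree f)"
proof -
  have "coeff (tmult q f g) (degree f + degree g)
      = (\<Sum>i\<le>degree f. if i = degree f then lead_coeff f * lead_coeff g ^ (q ^ degree f) else 0)"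
    unfolding coeff_tmult
  proof (rule sum.cong[OF refl])
    fix i assume i: "i \<in> {..degree f}"
    show "(if degree f + degree g < i then 0 else coeff f i * coeff g (degree f + degree g - i) ^ q ^ i) =
        (if i = degree f then lead_coeff f * lead_coeff g ^ q ^ degree f else 0)"
    proof (cases "i = degree f")
      case False
      then have "coeff g (degree f + degree g - i) = 0" using i by (intro coeff_eq_0) auto
      then show ?thesis using False qpos by simp
    qed simp
  qed
  also have "\<dots> = lead_coeff f * lead_coeff g ^ (q ^ degree f)" by simp
  finally show ?thesis .
qed

lemma Fq_0 [simp]: "(0::'k) \<in> Fq q" by (simp add: Fq_def)
lemma Fq_1 [simp]: "(1::'k) \<in> Fq q" by (simp add: Fq_def)
lemma Fq_add: "x \<in> Fq q \<Longrightarrow> y \<in> Fq q \<Longrightarrow> (x + y :: 'k) \<in> Fq q" by (simp add: Fq_def frob)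
lemma Fq_mult: "x \<in> Fq q \<Longrightarrow> y \<in> Fq q \<Longrightarrow> (x * y :: 'k) \<in> Fq q" by (simp add: Fq_def power_mult_distrib)
lemma Fq_minus: "x \<in> Fq q \<Longrightarrow> (- x :: 'k) \<in> Fq q" by (simp add: Fq_def frob_minus)
lemma Fq_sum: "(\<And>i. i \<in> I \<Longrightarrow> f i \<in> Fq q) \<Longrightarrow> (\<Sum>i\<in>I. f i :: 'k) \<in> Fq q"
  by (induct I rule: infinite_finite_induct) (auto intro: Fq_add)
lemma Fq_pow: "c \<in> Fq q \<Longrightarrow> (c::'k) ^ (q ^ i) = c"
  by (induct i) (auto simp: Fq_def power_mult)

lemma Apoly_pCons: "pCons c a \<in> Apoly q \<longleftrightarrow> c \<in> Fq q \<and> (a :: 'k poly) \<in> Apoly q"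
  unfolding Apoly_def by (auto simp: coeff_pCons split: nat.splits)

lemma Apoly_0 [simp]: "(0 :: 'k poly) \<in> Apoly q" by (simp add: Apoly_def)
lemma Apoly_1 [simp]: "(1 :: 'k poly) \<in> Apoly q" by (simp add: Apoly_def coeff_1)
lemma Apoly_tvar [simp]: "(tvar :: 'k poly) \<in> Apoly q" by (simp add: Apoly_def tvar_def coeff_pCons split: nat.splits)
lemma Apoly_add: "a \<in> Apoly q \<Longrightarrow> b \<in> Apoly q \<Longrightarrow> (a + b :: 'k poly) \<in> Apoly q"
  by (simp add: Apoly_def Fq_add)
lemma Apoly_minus: "a \<in> Apoly q \<Longrightarrow> (- a :: 'k poly) \<in> Apoly q"
  by (simp add: Apoly_def Fq_minus)
lemma Apoly_smult: "c \<in> Fq q \<Longrightarrow> a \<in> Apoly q \<Longrightarrow> (smult c a :: 'k poly) \<in> Apoly q"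
  by (simp add: Apoly_def Fq_mult)
lemma Apoly_mult: "a \<in> Apoly q \<Longrightarrow> b \<in> Apoly q \<Longrightarrow> (a * b :: 'k poly) \<in> Apoly q"
  unfolding Apoly_def by (auto simp: coeff_mult intro!: Fq_sum Fq_mult)

lemma Apoly_induct [consumes 1, case_names 0 pCons]:
  assumes "(a :: 'k poly) \<in> Apoly q" "P 0"
    "\<And>c a. c \<in> Fq q \<Longrightarrow> a \<in> Apoly q \<Longrightarrow> P a \<Longrightarrow> P (pCons c a)"
  shows "P a"
  using assms(1)
proof (induct a)
  case 0 then show ?case using assms(2) by simp
next
  case (pCons c a) then show ?case using assms(3) by (simp add: Apoly_pCons)
qed



lemma lin_tmult_right: "lin (\<lambda>i. tmult q (D i) g) a = tmult q (lin D a) (g :: 'k poly)"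
  by (simp add: lin_def tmult_sum_left tmult_smult_left)

lemma lin_tmult_left: "a \<in> Apoly q \<Longrightarrow> lin (\<lambda>i. tmult q g (D i)) a = tmult q g (lin D a :: 'k poly)"
  by (simp add: lin_def tmult_sum_right tmult_smult_right Apoly_def Fq_def)

lemma dm_lin: "dm_eval q phit a = lin (tpow q phit) a"
  by (simp add: dm_eval_def lin_def)

lemma dm_pCons: "dm_eval q phit (pCons c a) = smult c 1 + tmult q (dm_eval q phit a) (phit :: 'k poly)"
  unfolding dm_lin lin_pCons by (simp add: lin_tmult_right)

lemma dm_add: "dm_eval q phit (a + b) = dm_eval q phit a + dm_eval q (phit :: 'k poly) b"
  unfolding dm_lin by (rule lin_add)

lemma dm_smult: "dm_eval q phit (smult c a) = smult c (dm_eval q (phit :: 'k poly) a)"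
  unfolding dm_lin by (rule lin_smult)

lemma dm_0 [simp]: "dm_eval q (phit :: 'k poly) 0 = 0"
  unfolding dm_lin by simp

lemma dm_1 [simp]: "dm_eval q (phit :: 'k poly) 1 = 1"
  unfolding dm_lin lin_1 by simp

lemma dm_tvar [simp]: "dm_eval q (phit :: 'k poly) tvar = phit"
  by (simp add: tvar_def dm_pCons one_pCons[symmetric])

lemma dm_comm: "a \<in> Apoly q \<Longrightarrow> tmult q phit (dm_eval q phit a) = tmult q (dm_eval q phit a) (phit :: 'k poly)"
proof (induct a rule: Apoly_induct)
  case 0 then show ?case by simp
next
  case (pCons c a)
  have c: "c ^ q = c" using pCons(1) by (simp add: Fq_def)
  show ?case using pCons(3)
    by (simp add: dm_pCons tmult_add_right tmult_add_left tmult_const_right[OF c] tmult_smult_left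
        tmult_assoc[symmetric])
qed

lemma dm_comm': "a \<in> Apoly q \<Longrightarrow> tmult q phit (tmult q (dm_eval q phit a) X) = tmult q (dm_eval q phit a) (tmult q (phit :: 'k poly) X)"
  by (simp add: tmult_assoc[symmetric] dm_comm)

lemma dm_mult: "b \<in> Apoly q \<Longrightarrow> dm_eval q phit (a * b) = tmult q (dm_eval q phit a) (dm_eval q (phit :: 'k poly) b)"
proof (induct a)
  case 0 then show ?case by simp
next
  case (pCons c a)
  have "dm_eval q phit (pCons c a * b) = smult c (dm_eval q phit b) + tmult q (tmult q (dm_eval q phit a) (dm_eval q phit b)) phit"
    using pCons by (simp add: dm_add dm_smult dm_pCons)
  also have "\<dots> = tmult q (dm_eval q phit (pCons c a)) (dm_eval q phit b)"
    using pCons(3) by (simp add: dm_pCons tmult_add_left tmult_smult_left tmult_assoc dm_comm)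
  finally show ?case .
qed

lemma DerD:
  assumes "\<delta> \<in> Der q phit (psit :: 'k poly)"
  shows "\<And>a. a \<notin> Apoly q \<Longrightarrow> \<delta> a = 0"
    "\<And>a b. a \<in> Apoly q \<Longrightarrow> b \<in> Apoly q \<Longrightarrow> \<delta> (a + b) = \<delta> a + \<delta> b"
    "\<And>c a. c \<in> Fq q \<Longrightarrow> a \<in> Apoly q \<Longrightarrow> \<delta> (smult c a) = smult c (\<delta> a)"
    "\<And>a b. a \<in> Apoly q \<Longrightarrow> b \<in> Apoly q \<Longrightarrow>
        \<delta> (a * b) = tmult q (dm_eval q psit a) (\<delta> b) + tmult q (\<delta> a) (dm_eval q phit b)"
  using assms unfolding Der_def by auto

lemma Der_diff:
  assumes "\<delta>1 \<in> Der q phit (psit :: 'k poly)" "\<delta>2 \<in> Der q phit psit"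
  shows "(\<lambda>a. \<delta>1 a - \<delta>2 a) \<in> Der q phit psit"
  using DerD[OF assms(1)] DerD[OF assms(2)]
  unfolding Der_def by (auto simp: smult_diff_right tmult_diff_right tmult_diff_left)

lemma Der_comb:
  assumes "c \<in> Fq q" "\<delta>1 \<in> Der q phit (psit :: 'k poly)" "\<delta>2 \<in> Der q phit psit"
  shows "(\<lambda>a. smult c (\<delta>1 a) + \<delta>2 a) \<in> Der q phit psit"
proof -
  have c: "c ^ q = c" using assms(1) by (simp add: Fq_def)
  show ?thesis
  using DerD[OF assms(2)] DerD[OF assms(3)]
  unfolding Der_def by (auto simp: smult_add_right tmult_add_right tmult_add_left tmult_smult_left
      tmult_smult_right[OF c] algebra_simps)
qed

lemma Der_zero:
  assumes "\<delta> \<in> Der q phit (psit :: 'k poly)" "\<delta> tvar = 0"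
  shows "\<delta> a = 0"
proof (cases "a \<in> Apoly q")
  case False then show ?thesis using DerD(1)[OF assms(1)] by simp
next
  case True
  have d1: "\<delta> 1 = 0"
  proof -
    have "\<delta> (1 * 1) = \<delta> 1 + \<delta> 1" using DerD(4)[OF assms(1), of 1 1] by simp
    then have "\<delta> 1 = \<delta> 1 + \<delta> 1" by (simp only: mult_1)
    then show ?thesis using add_cancel_right_right by blast
  qed
  from True show ?thesis
  proof (induct a rule: Apoly_induct)
    case 0
    have "\<delta> (0 * 0) = 0" using DerD(4)[OF assms(1), of 0 0] by simp
    then show ?case by simp
  next
    case (pCons c a)
    have eq: "pCons c a = smult c 1 + a * tvar" by (simp add: tvar_def one_pCons[symmetric])
    have "\<delta> (pCons c a) = \<delta> (smult c 1) + \<delta> (a * tvar)"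
      unfolding eq using pCons(1,2) by (intro DerD(2)[OF assms(1)] Apoly_smult Apoly_mult) auto
    also have "\<dots> = 0"
    proof -
      have e1: "\<delta> (smult c 1) = smult c (\<delta> 1)" using pCons(1) by (intro DerD(3)[OF assms(1)]) auto
      have e2: "\<delta> (a * tvar) = tmult q (dm_eval q psit a) (\<delta> tvar) + tmult q (\<delta> a) (dm_eval q phit tvar)"
        using pCons(2) by (intro DerD(4)[OF assms(1)]) auto
      show ?thesis unfolding e1 e2 using pCons(3) by (simp add: d1 assms(2))
    qed
    finally show ?case .
  qed
qed

lemma Der_eq:
  assumes "\<delta>1 \<in> Der q phit (psit :: 'k poly)" "\<delta>2 \<in> Der q phit psit" "\<delta>1 tvar = \<delta>2 tvar"
  shows "\<delta>1 = \<delta>2"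
proof
  fix a
  have "(\<lambda>a. \<delta>1 a - \<delta>2 a) a = 0"
    by (rule Der_zero[OF Der_diff[OF assms(1,2)]]) (simp add: assms(3))
  then show "\<delta>1 a = \<delta>2 a" by simp
qed

lemma Der_inner:
  "(\<lambda>a. if a \<in> Apoly q then tmult q U (dm_eval q phit a) - tmult q (dm_eval q psit a) U else 0)
     \<in> Der q phit (psit :: 'k poly)"
proof -
  have sm: "tmult q U (smult c X) = smult c (tmult q U X)" if "c \<in> Fq q" for c X
    using that by (intro tmult_smult_right) (simp add: Fq_def)
  show ?thesis unfolding Der_def
    by (auto simp: Apoly_add Apoly_smult Apoly_mult dm_add dm_smult dm_mult sm
      tmult_add_right tmult_add_left tmult_diff_right tmult_diff_left tmult_smult_left
      tmult_assoc smult_diff_right)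
qed

lemma lin_Dseq_pCons:
  assumes "a \<in> Apoly q"
  shows "lin (Dseq q phit psit w) (pCons c a)
     = tmult q psit (lin (Dseq q phit psit w) a) + tmult q w (dm_eval q (phit :: 'k poly) a)"
proof -
  have "lin (Dseq q phit psit w) (pCons c a) = lin (\<lambda>i. Dseq q phit psit w (Suc i)) a"
    by (simp add: lin_pCons)
  also have "\<dots> = lin (\<lambda>i. tmult q psit (Dseq q phit psit w i)) a + lin (\<lambda>i. tmult q w (tpow q phit i)) a"
    by (simp add: lin_addD)
  also have "\<dots> = tmult q psit (lin (Dseq q phit psit w) a) + tmult q w (dm_eval q phit a)"
    using assms by (simp add: lin_tmult_left dm_lin)
  finally show ?thesis .
qed

lemma lin_Dseq_leibniz:
  assumes "a \<in> Apoly q" "b \<in> Apoly q"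
  shows "lin (Dseq q phit psit w) (a * b)
     = tmult q (dm_eval q psit a) (lin (Dseq q phit psit w) b) + tmult q (lin (Dseq q phit psit w) a) (dm_eval q (phit :: 'k poly) b)"
  using assms(1)
proof (induct a rule: Apoly_induct)
  case 0 then show ?case by simp
next
  case (pCons c a)
  let ?L = "lin (Dseq q phit psit w)"
  have ab: "a * b \<in> Apoly q" using pCons(2) assms(2) by (rule Apoly_mult)
  have "?L (pCons c a * b) = smult c (?L b) + ?L (pCons 0 (a * b))"
    by (simp add: lin_add lin_smult)
  also have "?L (pCons 0 (a * b)) = tmult q psit (?L (a * b)) + tmult q w (dm_eval q phit (a * b))"
    by (rule lin_Dseq_pCons[OF ab])
  finally show ?case
    using pCons(2,3) assms(2)
    by (simp add: dm_pCons lin_Dseq_pCons dm_mult tmult_add_right tmult_add_left tmult_smult_left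
        tmult_assoc dm_comm' algebra_simps)
qed

lemma Der_exists: "\<exists>\<delta>\<in>Der q phit (psit :: 'k poly). \<delta> tvar = w"
proof (intro bexI)
  show "dlt q phit psit w tvar = w"
    using Apoly_tvar by (simp add: dlt_def tvar_def lin_pCons one_pCons[symmetric] lin_1)
  show "dlt q phit psit w \<in> Der q phit psit"
    unfolding Der_def dlt_def
    by (auto simp: Apoly_add Apoly_smult Apoly_mult lin_add lin_smult lin_Dseq_leibniz)
qed

lemma inner_add: "inner q phit psit (U + V) = inner q phit psit U + inner q phit (psit :: 'k poly) V"
  by (simp add: inner_def tmult_add_left tmult_add_right)

lemma inner_diff: "inner q phit psit (U - V) = inner q phit psit U - inner q phit (psit :: 'k poly) V"
  by (simp add: inner_def tmult_diff_left tmult_diff_right)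

lemma inner_minus: "inner q phit psit (- U) = - inner q phit (psit :: 'k poly) U"
  by (simp add: inner_def tmult_minus_left tmult_minus_right)

lemma inner_0 [simp]: "inner q phit (psit :: 'k poly) 0 = 0"
  by (simp add: inner_def)

lemma inner_smult: "c \<in> Fq q \<Longrightarrow> inner q phit psit (smult c U) = smult c (inner q phit (psit :: 'k poly) U)"
  by (simp add: inner_def tmult_smult_left tmult_smult_right Fq_def smult_diff_right)

lemma inner_deg:
  assumes "degree psit < degree (phit :: 'k poly)" "U \<noteq> 0"
  shows "degree (inner q phit psit U) = degree U + degree phit
    \<and> coeff (inner q phit psit U) (degree U + degree phit) = lead_coeff U * lead_coeff phit ^ (q ^ degree U)"
proof -
  let ?n = "degree U + degree phit"
  have c1: "coeff (tmult q U phit) ?n = lead_coeff U * lead_coeff phit ^ (q ^ degree U)"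
    by (rule coeff_tmult_top)
  have "degree (tmult q psit U) < ?n"
    using degree_tmult_le[of psit U] assms(1) by simp
  then have c2: "coeff (tmult q psit U) ?n = 0" by (rule coeff_eq_0)
  have coef: "coeff (inner q phit psit U) ?n = lead_coeff U * lead_coeff phit ^ (q ^ degree U)"
    by (simp add: inner_def c1 c2)
  have "phit \<noteq> 0" using assms(1) by auto
  then have nz: "coeff (inner q phit psit U) ?n \<noteq> 0" using assms(2) coef by simp
  have "degree (inner q phit psit U) \<le> ?n"
    unfolding inner_def
    using degree_tmult_le[of U phit] degree_tmult_le[of psit U] assms(1)
    by (intro degree_diff_le) auto
  moreover have "?n \<le> degree (inner q phit psit U)" using nz by (rule le_degree)
  ultimately show ?thesis using coef by simp
qed

lemma inner_zero:
  assumes "degree psit < degree (phit :: 'k poly)" "degree (inner q phit psit U) < degree phit"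
  shows "U = 0"
  using inner_deg[OF assms(1)] assms(2) by fastforce

lemma reduce:
  assumes "degree psit < degree (phit :: 'k poly)"
  shows "\<exists>U. degree (w - inner q phit psit U) < degree phit"
proof (induct "degree w" arbitrary: w rule: less_induct)
  case less
  show ?case
  proof (cases "degree w < degree phit")
    case True then show ?thesis by (intro exI[of _ 0]) simp
  next
    case False
    let ?d = "degree w" and ?n = "degree phit"
    let ?k = "?d - ?n"
    have phit0: "phit \<noteq> 0" using assms by auto
    have w0: "w \<noteq> 0" using False assms by auto
    have lp: "lead_coeff phit ^ (q ^ ?k) \<noteq> 0" using phit0 by simp
    define c where "c = lead_coeff w / lead_coeff phit ^ (q ^ ?k)"
    have c0: "c \<noteq> 0" using w0 lp by (simp add: c_def)
    define U0 where "U0 = monom c ?k"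
    have dU0: "degree U0 = ?k" using c0 by (simp add: U0_def degree_monom_eq)
    have U00: "U0 \<noteq> 0" using c0 by (simp add: U0_def)
    have dk: "?k + ?n = ?d" using False by simp
    from inner_deg[OF assms U00]
    have V: "degree (inner q phit psit U0) = ?d" "coeff (inner q phit psit U0) ?d = lead_coeff w"
      using dU0 dk lp by (simp_all add: U0_def c_def)
    let ?w' = "w - inner q phit psit U0"
    have "degree ?w' \<le> ?d" using V by (intro degree_diff_le) auto
    moreover have "coeff ?w' ?d = 0" using V by simp
    moreover have "?d > 0" using False assms by simp
    ultimately have "degree ?w' < ?d"
      by (metis leading_coeff_0_iff degree_0 le_neq_implies_less)
    from less[OF this] obtain U1 where U1: "degree (?w' - inner q phit psit U1) < ?n" by blast
    have "w - inner q phit psit (U0 + U1) = ?w' - inner q phit psit U1"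
      by (simp add: inner_add)
    with U1 show ?thesis by metis
  qed
qed

lemma ext_rel_iff:
  "(\<delta>1, \<delta>2) \<in> ext_rel q phit psit \<longleftrightarrow> \<delta>1 \<in> Der q phit psit \<and> \<delta>2 \<in> Der q phit psit \<and>
     (\<exists>U. \<delta>1 tvar - \<delta>2 tvar = inner q phit (psit :: 'k poly) U)"
proof
  assume "(\<delta>1, \<delta>2) \<in> ext_rel q phit psit"
  then obtain U where D: "\<delta>1 \<in> Der q phit psit" "\<delta>2 \<in> Der q phit psit"
    and U: "(\<lambda>a. \<delta>1 a - \<delta>2 a) = (\<lambda>a. if a \<in> Apoly q then tmult q U (dm_eval q phit a) - tmult q (dm_eval q psit a) U else 0)"
    unfolding ext_rel_def Der_in_def by auto
  from fun_cong[OF U, of tvar] have "\<delta>1 tvar - \<delta>2 tvar = inner q phit psit U"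
    by (simp add: inner_def)
  with D show "\<delta>1 \<in> Der q phit psit \<and> \<delta>2 \<in> Der q phit psit \<and> (\<exists>U. \<delta>1 tvar - \<delta>2 tvar = inner q phit psit U)"
    by blast
next
  assume "\<delta>1 \<in> Der q phit psit \<and> \<delta>2 \<in> Der q phit psit \<and> (\<exists>U. \<delta>1 tvar - \<delta>2 tvar = inner q phit psit U)"
  then obtain U where D: "\<delta>1 \<in> Der q phit psit" "\<delta>2 \<in> Der q phit psit"
    and U: "\<delta>1 tvar - \<delta>2 tvar = inner q phit psit U" by blast
  have "(\<lambda>a. \<delta>1 a - \<delta>2 a) = (\<lambda>a. if a \<in> Apoly q then tmult q U (dm_eval q phit a) - tmult q (dm_eval q psit a) U else 0)"
    by (rule Der_eq[OF Der_diff[OF D] Der_inner]) (simp add: U inner_def)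
  then show "(\<delta>1, \<delta>2) \<in> ext_rel q phit psit"
    unfolding ext_rel_def Der_in_def using D by auto
qed

lemma ext_class_eq:
  "ext_class q phit psit w = {\<delta> \<in> Der q phit psit. \<exists>U. \<delta> tvar - w = inner q phit (psit :: 'k poly) U}"
  unfolding ext_class_def ext_rel_iff using Der_exists[of phit psit w] by auto

lemma ext_rel_image:
  "ext_rel q phit psit `` {\<delta>} = {\<delta>' \<in> Der q phit psit. \<delta> \<in> Der q phit psit \<and> (\<exists>U. \<delta> tvar - \<delta>' tvar = inner q phit (psit :: 'k poly) U)}"
  unfolding Image_def by (auto simp: ext_rel_iff)

lemma main_part:
  assumes "degree psit < degree (phit :: 'k poly)"
  shows "bij_betw (ext_class q phit psit) {w. degree w < degree phit} (Ext1 q phit psit)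
    \<and> (\<forall>w1 w2 c \<delta>1 \<delta>2. degree w1 < degree phit \<longrightarrow> degree w2 < degree phit \<longrightarrow> c \<in> Fq q \<longrightarrow>
         \<delta>1 \<in> ext_class q phit psit w1 \<longrightarrow> \<delta>2 \<in> ext_class q phit psit w2 \<longrightarrow>
         (\<lambda>a. smult c (\<delta>1 a) + \<delta>2 a) \<in> ext_class q phit psit (smult c w1 + w2))"
proof (intro conjI allI impI)
  let ?I = "inner q phit psit"
  show "bij_betw (ext_class q phit psit) {w. degree w < degree phit} (Ext1 q phit psit)"
  proof (rule bij_betw_imageI)
    show "inj_on (ext_class q phit psit) {w. degree w < degree phit}"
    proof (rule inj_onI)
      fix w1 w2 assume w1: "w1 \<in> {w. degree w < degree phit}" and w2: "w2 \<in> {w. degree w < degree phit}"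
        and eq: "ext_class q phit psit w1 = ext_class q phit psit w2"
      obtain \<delta> where d: "\<delta> \<in> Der q phit psit" "\<delta> tvar = w1" using Der_exists by blast
      have "\<delta> \<in> ext_class q phit psit w1" unfolding ext_class_eq using d by (auto intro!: exI[of _ 0])
      then have "\<delta> \<in> ext_class q phit psit w2" using eq by simp
      then obtain U where U: "w1 - w2 = ?I U" unfolding ext_class_eq using d by auto
      have "degree w1 \<le> degree phit - 1" "degree w2 \<le> degree phit - 1" using w1 w2 by auto
      then have "degree (w1 - w2) \<le> degree phit - 1" by (rule degree_diff_le)
      then have "degree (w1 - w2) < degree phit" using assms by linarith
      then have "U = 0" using inner_zero[OF assms] U by simp
      then show "w1 = w2" using U by simp
    qed
    show "ext_class q phit psit ` {w. degree w < degree phit} = Ext1 q phit psit"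
    proof
      show "ext_class q phit psit ` {w. degree w < degree phit} \<subseteq> Ext1 q phit psit"
      proof
        fix X assume "X \<in> ext_class q phit psit ` {w. degree w < degree phit}"
        then obtain w where X: "X = ext_class q phit psit w" by blast
        obtain \<delta> where d: "\<delta> \<in> Der q phit psit" "\<delta> tvar = w" using Der_exists by blast
        have "X = ext_rel q phit psit `` {\<delta>}"
        proof -
          have "(\<exists>U. \<delta>' tvar - w = ?I U) \<longleftrightarrow> (\<exists>U. w - \<delta>' tvar = ?I U)" for \<delta>'
          proof
            assume "\<exists>U. \<delta>' tvar - w = ?I U"
            then obtain U where "\<delta>' tvar - w = ?I U" by blast
            then have "w - \<delta>' tvar = - ?I U" by (metis minus_diff_eq)
            then have "w - \<delta>' tvar = ?I (- U)" by (simp add: inner_minus)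
            then show "\<exists>U. w - \<delta>' tvar = ?I U" by blast
          next
            assume "\<exists>U. w - \<delta>' tvar = ?I U"
            then obtain U where "w - \<delta>' tvar = ?I U" by blast
            then have "\<delta>' tvar - w = - ?I U" by (metis minus_diff_eq)
            then have "\<delta>' tvar - w = ?I (- U)" by (simp add: inner_minus)
            then show "\<exists>U. \<delta>' tvar - w = ?I U" by blast
          qed
          then show ?thesis unfolding X ext_class_eq ext_rel_image using d by auto
        qed
        then show "X \<in> Ext1 q phit psit" unfolding Ext1_def using d by (auto intro: quotientI)
      qed
      show "Ext1 q phit psit \<subseteq> ext_class q phit psit ` {w. degree w < degree phit}"
      proof
        fix X assume "X \<in> Ext1 q phit psit"
        then obtain \<delta> where d: "\<delta> \<in> Der q phit psit" and X: "X = ext_rel q phit psit `` {\<delta>}"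
          unfolding Ext1_def quotient_def by blast
        obtain U where U: "degree (\<delta> tvar - ?I U) < degree phit" using reduce[OF assms] by blast
        let ?w = "\<delta> tvar - ?I U"
        have "(\<exists>V. \<delta>' tvar - ?w = ?I V) \<longleftrightarrow> (\<exists>V. \<delta> tvar - \<delta>' tvar = ?I V)" for \<delta>'
        proof
          assume "\<exists>V. \<delta>' tvar - ?w = ?I V"
          then obtain V where "\<delta>' tvar - ?w = ?I V" by blast
          then have "\<delta> tvar - \<delta>' tvar = ?I (U - V)" by (simp add: inner_diff algebra_simps)
          then show "\<exists>V. \<delta> tvar - \<delta>' tvar = ?I V" by blast
        next
          assume "\<exists>V. \<delta> tvar - \<delta>' tvar = ?I V"
          then obtain V where "\<delta> tvar - \<delta>' tvar = ?I V" by blast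
          then have "\<delta>' tvar - ?w = ?I (U - V)" by (simp add: inner_diff algebra_simps)
          then show "\<exists>V. \<delta>' tvar - ?w = ?I V" by blast
        qed
        then have "X = ext_class q phit psit ?w" unfolding X ext_class_eq ext_rel_image using d by auto
        then show "X \<in> ext_class q phit psit ` {w. degree w < degree phit}" using U by blast
      qed
    qed
  qed
next
  fix w1 w2 :: "'k poly" and c :: 'k and \<delta>1 \<delta>2 :: "'k poly \<Rightarrow> 'k poly"
  assume c: "c \<in> Fq q" and d1: "\<delta>1 \<in> ext_class q phit psit w1" and d2: "\<delta>2 \<in> ext_class q phit psit w2"
  from d1 obtain U1 where D1: "\<delta>1 \<in> Der q phit psit" "\<delta>1 tvar - w1 = inner q phit psit U1"
    unfolding ext_class_eq by blast
  from d2 obtain U2 where D2: "\<delta>2 \<in> Der q phit psit" "\<delta>2 tvar - w2 = inner q phit psit U2"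
    unfolding ext_class_eq by blast
  have "(smult c (\<delta>1 tvar) + \<delta>2 tvar) - (smult c w1 + w2) = inner q phit psit (smult c U1 + U2)"
    using D1(2) D2(2) c by (simp add: inner_add inner_smult smult_add_right algebra_simps)
  then show "(\<lambda>a. smult c (\<delta>1 a) + \<delta>2 a) \<in> ext_class q phit psit (smult c w1 + w2)"
    unfolding ext_class_eq using Der_comb[OF c D1(1) D2(1)] by auto
qed

end

theorem lemma3p1:
  fixes p e q :: nat and \<theta> :: "'k::field" and phit psit :: "'k poly"
  assumes "prime p" and "e \<ge> 1" and "q = p ^ e" and "CHAR('k) = p"
    and "card (Fq q :: 'k set) = q"
    and "drinfeld_module \<theta> phit" and "drinfeld_module \<theta> psit"
    and "degree phit > degree psit"
  shows "bij_betw (ext_class q phit psit) {w. degree w < degree phit} (Ext1 q phit psit)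
    \<and> (\<forall>w1 w2 c \<delta>1 \<delta>2. degree w1 < degree phit \<longrightarrow> degree w2 < degree phit \<longrightarrow> c \<in> Fq q \<longrightarrow>
         \<delta>1 \<in> ext_class q phit psit w1 \<longrightarrow> \<delta>2 \<in> ext_class q phit psit w2 \<longrightarrow>
         (\<lambda>a. smult c (\<delta>1 a) + \<delta>2 a) \<in> ext_class q phit psit (smult c w1 + w2))"
proof -
  have qpos: "q > 0" using assms(1,3) by (simp add: prime_gt_0_nat)
  have frob: "\<And>x y :: 'k. (x + y) ^ q = x ^ q + y ^ q"
    using assms(1,3,4) by (intro freshmans_dream') auto
  show ?thesis by (rule main_part[OF qpos frob assms(8)])
qed

end
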